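(* Let $\mathcal{H}\subseteq\mathbb{R}^n$ be an affine subspace (not necessarily generic) and let $\mathcal{P}=[0,1]^n\cap\mathcal{H}$, with vertex set $V$. Then there exist Bernstein polynomials $P_v(x)$, one for each vertex $v\in V$, such that the Bernoulli race over the Bernstein polynomials $\{P_v\}_{v\in V}$ is a Bernoulli factory for $\mathcal{P}$.
   Context: A Bernstein monomial is $\prod_{i=1}^n x_i^{a_i}(1-x_i)^{b_i}$ with nonnegative integers $a_i,b_i$; a Bernstein polynomial is a finite combination $\sum_j c_jM_j(x)$ of Bernstein monomials with positive coefficients $c_j$. A Bernoulli factory with output set $V$ (for inputs $x\in[0,1]^n$) is a (possibly infinite) rooted binary tree whose internal nodes are labeled by an index $i\in[n]$ or a known constant $c\in(0,1)$ and whose leaves are labeled by elements of $V$; on input $x$ one walks from the root, at a node labeled $i$ flipping a fresh independent coin that is $1$ with probability $x_i$ (an $x_i$-coin), at a node labeled $c$ a fresh coin of bias $c$, following the edge labeled by the outcome, and outputs the label of the leaf reached; $\mathcal{F}(x)$ is the output ($\emptyset$ if no leaf is reached). A Bernoulli factory for the polytope $\mathcal{P}$ is such a factory with output set $V$ that terminates almost surely (i.e. $\Pr[\mathcal{F}(x)=\emptyset]=0$) and satisfies $\mathbb{E}[\mathcal{F}(x)]=x$ for all $x\in\mathcal{P}\cap(0,1)^n$. The Bernoulli race over Bernstein polynomials $\{P_v\}_{v\in V}$ is the following factory: fix a constant $C\ge1$ at least the sum of the coefficients of every $P_v$. In each round, pick $v\in V$ uniformly at random; writing $P_v=\sum_j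 c_jM_j$, select monomial $M_j$ with probability $c_j/C$ (with the remaining probability select none, which counts as failure); if $M_j=\prod_i x_i^{a_i}(1-x_i)^{b_i}$ is selected, flip the $x_i$-coin $a_i+b_i$ times for each $i$, and declare success iff for every $i$ the first $a_i$ flips are $1$ and the next $b_i$ flips are $0$. On success output $v$; otherwise start a new round. *)

theory Defs
  imports "HOL-Analysis.Analysis" "HOL-Probability.Probability"
begin

text \<open>Inputs live in real ^ 'n (coordinates indexed by a finite type 'n, i.e. n = CARD('n)).
A Bernstein monomial prod_i x_i^(a i) (1 - x_i)^(b i) is represented by its exponent pair (a, b);
a Bernstein polynomial by the list of its terms (c_j, (a_j, b_j)) with positive coefficients c_j.\<close>

type_synonym 'n bmono = "('n \<Rightarrow> nat) \<times> ('n \<Rightarrow> nat)"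
type_synonym 'n bpoly = "(real \<times> 'n bmono) list"

definition bmono_eval :: "'n::finite bmono \<Rightarrow> real ^ 'n \<Rightarrow> real" where
  "bmono_eval m x = (\<Prod>i\<in>UNIV. (x $ i) ^ (fst m i) * (1 - x $ i) ^ (snd m i))"

definition bpoly_eval :: "'n::finite bpoly \<Rightarrow> real ^ 'n \<Rightarrow> real" where
  "bpoly_eval p x = (\<Sum>(c, m)\<leftarrow>p. c * bmono_eval m x)"

definition is_bernstein_poly :: "'n::finite bpoly \<Rightarrow> bool" where
  "is_bernstein_poly p \<longleftrightarrow> (\<forall>(c, m)\<in>set p. c > 0)"

definition coeff_sum :: "'n::finite bpoly \<Rightarrow> real" where
  "coeff_sum p = (\<Sum>(c, m)\<leftarrow>p. c)"

text \<open>Select the j-th monomial with probability c_j / C (None = no monomial selected,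
with the remaining probability 1 - (sum_j c_j) / C), realised by sequential coin choices.\<close>
fun select_monomial :: "real \<Rightarrow> (real \<times> 'm) list \<Rightarrow> 'm option pmf" where
  "select_monomial C [] = return_pmf None"
| "select_monomial C ((c, m) # ms) =
     bind_pmf (bernoulli_pmf (c / C))
       (\<lambda>b. if b then return_pmf (Some m) else select_monomial (C - c) ms)"

fun flip_pattern :: "real \<Rightarrow> bool list \<Rightarrow> bool pmf" where
  "flip_pattern p [] = return_pmf True"
| "flip_pattern p (t # ts) =
     bind_pmf (bernoulli_pmf p) (\<lambda>c. map_pmf (\<lambda>s. c = t \<and> s) (flip_pattern p ts))"

definition monomial_test :: "real ^ 'n \<Rightarrow> ('n::finite) bmono \<Rightarrow> bool pmf" where
  "monomial_test x m =
     map_pmf (\<lambda>f. \<forall>i. f i)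
       (Pi_pmf UNIV True (\<lambda>i. flip_pattern (x $ i) (replicate (fst m i) True @ replicate (snd m i) False)))"

definition race_round ::
  "(real ^ 'n) set \<Rightarrow> (real ^ 'n \<Rightarrow> ('n::finite) bpoly) \<Rightarrow> real \<Rightarrow> real ^ 'n \<Rightarrow> (real ^ 'n) option pmf" where
  "race_round V P C x =
     bind_pmf (pmf_of_set V) (\<lambda>v.
       bind_pmf (select_monomial C (P v)) (\<lambda>sel.
         case sel of
           None \<Rightarrow> return_pmf None
         | Some m \<Rightarrow> map_pmf (\<lambda>ok. if ok then Some v else None) (monomial_test x m)))"

text \<open>The Bernoulli race: repeat rounds until success. Its output distribution is a
subprobability distribution; missing mass = probability of non-termination.\<close>
partial_function (spmf) bernoulli_race ::
  "(real ^ 'n) set \<Rightarrow> (real ^ 'n \<Rightarrow> ('n::finite) bpoly) \<Rightarrow> real \<Rightarrow> real ^ 'n \<Rightarrow> (real ^ 'n) spmf" where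
  "bernoulli_race V P C x =
     bind_pmf (race_round V P C x) (\<lambda>r.
       case r of Some v \<Rightarrow> return_spmf v | None \<Rightarrow> bernoulli_race V P C x)"

text \<open>The factory is given by its output (sub)distribution F x on V.\<close>
definition unit_open_cube :: "(real ^ 'n::finite) set" where
  "unit_open_cube = {x. \<forall>i. 0 < x $ i \<and> x $ i < 1}"

definition unit_cube :: "(real ^ 'n::finite) set" where
  "unit_cube = {x. \<forall>i. 0 \<le> x $ i \<and> x $ i \<le> 1}"

definition is_bernoulli_factory_for ::
  "(real ^ 'n::finite) set \<Rightarrow> (real ^ 'n) set \<Rightarrow> (real ^ 'n \<Rightarrow> (real ^ 'n) spmf) \<Rightarrow> bool" where
  "is_bernoulli_factory_for Pol V F \<longleftrightarrow>
     (\<forall>x\<in>Pol \<inter> unit_open_cube.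
        lossless_spmf (F x) \<and> set_spmf (F x) \<subseteq> V \<and>
        (\<Sum>v\<in>V. spmf (F x) v *\<^sub>R v) = x)"

end

theory Submission
  imports Defs
begin

lemma sl_scaleR_right: "(\<Sum>x\<leftarrow>xs. c *\<^sub>R (f x :: 'a::real_vector)) = c *\<^sub>R (\<Sum>x\<leftarrow>xs. f x)"
  by (induct xs) (auto simp: algebra_simps)

lemma sl_scaleR_left: "(\<Sum>x\<leftarrow>xs. f x *\<^sub>R (v :: 'a::real_vector)) = (\<Sum>x\<leftarrow>xs. f x) *\<^sub>R v"
  by (induct xs) (auto simp: algebra_simps)

lemma sl_inner: "(a::'a::real_inner) \<bullet> (\<Sum>x\<leftarrow>xs. f x) = (\<Sum>x\<leftarrow>xs. a \<bullet> f x)"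
  by (induct xs) (auto simp: inner_add_right)

lemma sl_add: "(\<Sum>x\<leftarrow>xs. (f x + g x :: 'a::ab_group_add)) = (\<Sum>x\<leftarrow>xs. f x) + (\<Sum>x\<leftarrow>xs. g x)"
  by (induct xs) (auto simp: algebra_simps)

lemma sl_mult_left: "(\<Sum>x\<leftarrow>xs. c * (f x :: real)) = c * (\<Sum>x\<leftarrow>xs. f x)"
  by (induct xs) (auto simp: algebra_simps)

lemma sl_concat: "(\<Sum>y\<leftarrow>concat (map (\<lambda>x. map (g x) ys) xs). (f y :: 'a::ab_group_add)) = (\<Sum>x\<leftarrow>xs. \<Sum>y\<leftarrow>ys. f (g x y))"
  by (induct xs) (auto simp: algebra_simps comp_def)

lemma sl_filter3: "(\<Sum>x\<leftarrow>xs. (f x :: 'a::ab_group_add)) =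
   (\<Sum>x\<leftarrow>filter (\<lambda>x. (g x::real) > 0) xs. f x) + (\<Sum>x\<leftarrow>filter (\<lambda>x. g x < 0) xs. f x) + (\<Sum>x\<leftarrow>filter (\<lambda>x. g x = 0) xs. f x)"
  by (induct xs) (auto simp: algebra_simps)

section \<open>Bernstein polynomial algebra\<close>

definition bmono_mult :: "'n bmono \<Rightarrow> 'n bmono \<Rightarrow> 'n bmono" where
  "bmono_mult m1 m2 = (\<lambda>i. fst m1 i + fst m2 i, \<lambda>i. snd m1 i + snd m2 i)"

definition bpoly_mult :: "'n::finite bpoly \<Rightarrow> 'n bpoly \<Rightarrow> 'n bpoly" where
  "bpoly_mult p q = concat (map (\<lambda>t. map (\<lambda>s. (fst t * fst s, bmono_mult (snd t) (snd s))) q) p)"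

definition bpoly_scale :: "real \<Rightarrow> 'n::finite bpoly \<Rightarrow> 'n bpoly" where
  "bpoly_scale r p = map (\<lambda>t. (r * fst t, snd t)) p"

definition pos_poly :: "'n::finite bpoly \<Rightarrow> bool" where
  "pos_poly p \<longleftrightarrow> p \<noteq> [] \<and> is_bernstein_poly p"

lemma bpoly_eval_alt: "bpoly_eval p x = (\<Sum>t\<leftarrow>p. fst t * bmono_eval (snd t) x)"
  unfolding bpoly_eval_def by (simp add: split_def)

lemma bmono_eval_mult: "bmono_eval (bmono_mult m n) x = bmono_eval m x * bmono_eval n x"
  unfolding bmono_eval_def bmono_mult_def
  by (simp add: power_add prod.distrib[symmetric] algebra_simps)

lemma bpoly_eval_mult: "bpoly_eval (bpoly_mult p q) x = bpoly_eval p x * bpoly_eval q x"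
proof -
  have "bpoly_eval (bpoly_mult p q) x = (\<Sum>t\<leftarrow>p. \<Sum>s\<leftarrow>q. fst t * fst s * bmono_eval (bmono_mult (snd t) (snd s)) x)"
    unfolding bpoly_eval_alt bpoly_mult_def by (subst sl_concat) simp
  also have "\<dots> = (\<Sum>t\<leftarrow>p. (fst t * bmono_eval (snd t) x) * (\<Sum>s\<leftarrow>q. fst s * bmono_eval (snd s) x))"
    by (simp add: bmono_eval_mult sl_mult_left[symmetric] algebra_simps)
  also have "\<dots> = bpoly_eval p x * bpoly_eval q x"
    unfolding bpoly_eval_alt by (induct p) (auto simp: algebra_simps)
  finally show ?thesis .
qed

lemma bpoly_eval_scale: "bpoly_eval (bpoly_scale r p) x = r * bpoly_eval p x"
  unfolding bpoly_eval_alt bpoly_scale_def by (induct p) (auto simp: algebra_simps)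

lemma pos_poly_mult: "pos_poly p \<Longrightarrow> pos_poly q \<Longrightarrow> pos_poly (bpoly_mult p q)"
proof -
  assume p: "pos_poly p" and q: "pos_poly q"
  then have "\<forall>t\<in>set p. fst t > 0" "\<forall>s\<in>set q. fst s > 0"
    by (auto simp: pos_poly_def is_bernstein_poly_def split_def)
  then have "\<forall>u\<in>set (bpoly_mult p q). fst u > 0"
    unfolding bpoly_mult_def by (auto intro!: mult_pos_pos)
  moreover have "bpoly_mult p q \<noteq> []" using p q
    unfolding pos_poly_def bpoly_mult_def by (cases p; cases q) auto
  ultimately show ?thesis unfolding pos_poly_def is_bernstein_poly_def by force
qed

lemma pos_poly_scale: "pos_poly p \<Longrightarrow> r > 0 \<Longrightarrow> pos_poly (bpoly_scale r p)"
  unfolding pos_poly_def is_bernstein_poly_def bpoly_scale_def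
  by (auto simp: split_def)

lemma bmono_eval_pos: "x \<in> unit_open_cube \<Longrightarrow> bmono_eval m x > 0"
  unfolding bmono_eval_def unit_open_cube_def
  by (intro prod_pos) auto

lemma bmono_eval_nonneg: "x \<in> unit_cube \<Longrightarrow> bmono_eval m x \<ge> 0"
  unfolding bmono_eval_def unit_cube_def
  by (intro prod_nonneg) auto

lemma pos_poly_eval: "pos_poly p \<Longrightarrow> x \<in> unit_open_cube \<Longrightarrow> bpoly_eval p x > 0"
proof (induct p)
  case Nil then show ?case by (simp add: pos_poly_def)
next
  case (Cons t p)
  have t: "fst t * bmono_eval (snd t) x > 0"
    using Cons.prems bmono_eval_pos[of x "snd t"] by (auto simp: pos_poly_def is_bernstein_poly_def split_def)
  show ?case
  proof (cases "p = []")
    case True then show ?thesis using t by (simp add: bpoly_eval_alt)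
  next
    case False
    then have "pos_poly p" using Cons.prems by (auto simp: pos_poly_def is_bernstein_poly_def)
    then have "bpoly_eval p x > 0" using Cons by auto
    then show ?thesis using t by (simp add: bpoly_eval_alt)
  qed
qed


section \<open>Families of weighted points\<close>

definition fsum :: "('n::finite bpoly \<times> (real^'n)) list \<Rightarrow> real^'n \<Rightarrow> real^'n" where
  "fsum F x = (\<Sum>q\<leftarrow>F. bpoly_eval (fst q) x *\<^sub>R (snd q - x))"

lemma fsum_append: "fsum (F @ G) x = fsum F x + fsum G x"
  unfolding fsum_def by simp

lemma sl_pos: "xs \<noteq> [] \<Longrightarrow> \<forall>y\<in>set xs. f y > (0::real) \<Longrightarrow> (\<Sum>y\<leftarrow>xs. f y) > 0"
proof (induct xs)
  case Nil then show ?case by simp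
next
  case (Cons a xs) then show ?case by (cases "xs = []") (auto intro: add_pos_pos)
qed

lemma sl_zero: "\<forall>y\<in>set xs. f y = (0::'a::monoid_add) \<Longrightarrow> (\<Sum>y\<leftarrow>xs. f y) = 0"
  by (induct xs) auto

lemma sl_neg: "(\<Sum>y\<leftarrow>xs. f y * - g y) = - (\<Sum>y\<leftarrow>xs. f y * (g y :: real))"
  by (induct xs) auto

lemma sl_uminus: "(\<Sum>y\<leftarrow>xs. - f y) = - (\<Sum>y\<leftarrow>xs. (f y :: 'a::ab_group_add))"
  by (induct xs) auto

lemma pair_alg:
  fixes z1 z2 x :: "'a::real_vector"
  assumes "d = p1 - p2" "d \<noteq> 0"
  shows "(d * (m1 * m2)) *\<^sub>R ((1/d) *\<^sub>R ((-p2) *\<^sub>R z1 + p1 *\<^sub>R z2) - x) =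
         (m2 * -p2) *\<^sub>R (m1 *\<^sub>R (z1 - x)) + (m1 * p1) *\<^sub>R (m2 *\<^sub>R (z2 - x))"
proof -
  have e: "(d * (m1 * m2)) * (1/d) = m1 * m2" using assms(2) by simp
  have "(d * (m1 * m2)) *\<^sub>R ((1/d) *\<^sub>R ((-p2) *\<^sub>R z1 + p1 *\<^sub>R z2)) = (m1 * m2) *\<^sub>R ((-p2) *\<^sub>R z1 + p1 *\<^sub>R z2)"
    unfolding scaleR_scaleR e ..
  note h1 = this
  have L: "(d * (m1 * m2)) *\<^sub>R ((1/d) *\<^sub>R ((-p2) *\<^sub>R z1 + p1 *\<^sub>R z2) - x) =
     (d * (m1 * m2)) *\<^sub>R ((1/d) *\<^sub>R ((-p2) *\<^sub>R z1 + p1 *\<^sub>R z2)) - (d * (m1 * m2)) *\<^sub>R x"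
    by (rule scaleR_right_diff_distrib)
  have E: "(d * (m1 * m2)) *\<^sub>R ((1/d) *\<^sub>R ((-p2) *\<^sub>R z1 + p1 *\<^sub>R z2) - x) =
     (m1 * m2) *\<^sub>R ((-p2) *\<^sub>R z1 + p1 *\<^sub>R z2) - (d * (m1 * m2)) *\<^sub>R x"
    by (unfold L h1) (rule refl)
  show ?thesis
    apply (subst E)
    apply (subst assms(1))
    by (simp add: algebra_simps)
qed


lemma pair_identity:
  fixes F :: "('n::finite bpoly \<times> (real^'n)) list" and a x :: "real^'n"
    and b :: real
  defines "\<phi> \<equiv> \<lambda>z. a \<bullet> z - b"
  defines "pl \<equiv> filter (\<lambda>q. \<phi> (snd q) > 0) F"
  defines "mi \<equiv> filter (\<lambda>q. \<phi> (snd q) < 0) F"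
  defines "ze \<equiv> filter (\<lambda>q. \<phi> (snd q) = 0) F"
  defines "pairs \<equiv> concat (map (\<lambda>q1. map (\<lambda>q2.
      (bpoly_scale (\<phi> (snd q1) - \<phi> (snd q2)) (bpoly_mult (fst q1) (fst q2)),
       (1 / (\<phi> (snd q1) - \<phi> (snd q2))) *\<^sub>R ((- \<phi> (snd q2)) *\<^sub>R snd q1 + \<phi> (snd q1) *\<^sub>R snd q2))) mi) pl)"
  defines "zer \<equiv> concat (map (\<lambda>q0. map (\<lambda>q1.
      (bpoly_scale (\<phi> (snd q1)) (bpoly_mult (fst q0) (fst q1)), snd q0)) pl) ze)"
  assumes x: "a \<bullet> x = b" and F0: "fsum F x = 0"
  shows "fsum (pairs @ zer) x = 0"
proof -
  define m where "m q = bpoly_eval (fst q) x" for q :: "'n bpoly \<times> (real^'n)"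
  define A where "A q = m q *\<^sub>R (snd q - x)" for q :: "'n bpoly \<times> (real^'n)"
  define W where "W L = (\<Sum>q\<leftarrow>L. m q * \<phi> (snd q))" for L
  have fsA: "fsum L x = (\<Sum>q\<leftarrow>L. A q)" for L unfolding fsum_def A_def m_def by simp
  have WF: "W F = 0"
  proof -
    have "W F = (\<Sum>q\<leftarrow>F. a \<bullet> A q)"
      unfolding W_def A_def \<phi>_def using x
      by (intro arg_cong[where f=sum_list] map_cong) (auto simp: inner_diff_right)
    also have "\<dots> = a \<bullet> fsum F x" unfolding fsA sl_inner ..
    finally show ?thesis using F0 by simp
  qed
  have Wze: "W ze = 0" unfolding W_def ze_def by (rule sl_zero) auto
  have Wsplit: "W F = W pl + W mi + W ze"
    unfolding W_def pl_def mi_def ze_def by (rule sl_filter3)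
  have Fsplit: "fsum F x = fsum pl x + fsum mi x + fsum ze x"
    unfolding fsA pl_def mi_def ze_def by (rule sl_filter3)
  have Wmi: "W mi = - W pl" using WF Wze Wsplit by simp
  have mi_neg: "\<phi> (snd q) < 0" if "q \<in> set mi" for q using that unfolding mi_def by auto
  have pl_pos: "\<phi> (snd q) > 0" if "q \<in> set pl" for q using that unfolding pl_def by auto
  have "fsum pairs x = (\<Sum>q1\<leftarrow>pl. \<Sum>q2\<leftarrow>mi.
          (m q2 * - \<phi> (snd q2)) *\<^sub>R A q1 + (m q1 * \<phi> (snd q1)) *\<^sub>R A q2)"
    unfolding fsum_def pairs_def sl_concat
  proof (intro arg_cong[where f=sum_list] map_cong refl)
    fix q1 q2 assume q1: "q1 \<in> set pl" and q2: "q2 \<in> set mi"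
    have d: "\<phi> (snd q1) - \<phi> (snd q2) \<noteq> 0" using pl_pos[OF q1] mi_neg[OF q2] by simp
    show "bpoly_eval (fst (bpoly_scale (\<phi> (snd q1) - \<phi> (snd q2)) (bpoly_mult (fst q1) (fst q2)),
            (1 / (\<phi> (snd q1) - \<phi> (snd q2))) *\<^sub>R ((- \<phi> (snd q2)) *\<^sub>R snd q1 + \<phi> (snd q1) *\<^sub>R snd q2))) x *\<^sub>R
          (snd (bpoly_scale (\<phi> (snd q1) - \<phi> (snd q2)) (bpoly_mult (fst q1) (fst q2)),
            (1 / (\<phi> (snd q1) - \<phi> (snd q2))) *\<^sub>R ((- \<phi> (snd q2)) *\<^sub>R snd q1 + \<phi> (snd q1) *\<^sub>R snd q2)) - x) =
          (m q2 * - \<phi> (snd q2)) *\<^sub>R A q1 + (m q1 * \<phi> (snd q1)) *\<^sub>R A q2"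
      unfolding A_def m_def bpoly_eval_scale bpoly_eval_mult fst_conv snd_conv
      by (rule pair_alg[OF refl d])
  qed
  also have "\<dots> = (\<Sum>q1\<leftarrow>pl. (- W mi) *\<^sub>R A q1 + (m q1 * \<phi> (snd q1)) *\<^sub>R fsum mi x)"
    unfolding sl_add sl_scaleR_left sl_scaleR_right fsA W_def
    by (simp add: sl_mult_left[symmetric] sl_neg sl_uminus algebra_simps)
  also have "\<dots> = (- W mi) *\<^sub>R fsum pl x + W pl *\<^sub>R fsum mi x"
    unfolding sl_add sl_scaleR_left sl_scaleR_right fsA W_def ..
  finally have P: "fsum pairs x = W pl *\<^sub>R (fsum pl x + fsum mi x)"
    using Wmi by (simp add: scaleR_add_right)
  have "fsum zer x = (\<Sum>q0\<leftarrow>ze. \<Sum>q1\<leftarrow>pl. (m q1 * \<phi> (snd q1)) *\<^sub>R A q0)"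
    unfolding fsum_def zer_def sl_concat A_def m_def
    by (simp add: bpoly_eval_scale bpoly_eval_mult algebra_simps)
  also have "\<dots> = W pl *\<^sub>R fsum ze x"
    unfolding sl_scaleR_left sl_scaleR_right fsA W_def ..
  finally have Z: "fsum zer x = W pl *\<^sub>R fsum ze x" .
  show ?thesis unfolding fsum_append P Z
    using F0 Fsplit by (simp add: scaleR_add_right[symmetric])
qed


lemma pair_step:
  fixes F :: "('n::finite bpoly \<times> (real^'n)) list" and a :: "real^'n" and b :: real
  assumes F: "\<forall>q\<in>set F. pos_poly (fst q) \<and> snd q \<in> S" and S: "convex S"
    and X: "X \<subseteq> unit_open_cube" and id: "\<forall>x\<in>X. F \<noteq> [] \<and> fsum F x = 0"
  shows "\<exists>G. (\<forall>q\<in>set G. pos_poly (fst q) \<and> snd q \<in> S \<and> a \<bullet> snd q = b) \<and>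
             (\<forall>x\<in>X. a \<bullet> x = b \<longrightarrow> G \<noteq> [] \<and> fsum G x = 0)"
proof -
  define \<phi> where "\<phi> = (\<lambda>z. a \<bullet> z - b)"
  define pl where "pl = filter (\<lambda>q. \<phi> (snd q) > 0) F"
  define mi where "mi = filter (\<lambda>q. \<phi> (snd q) < 0) F"
  define ze where "ze = filter (\<lambda>q. \<phi> (snd q) = 0) F"
  define pairs where "pairs = concat (map (\<lambda>q1. map (\<lambda>q2.
      (bpoly_scale (\<phi> (snd q1) - \<phi> (snd q2)) (bpoly_mult (fst q1) (fst q2)),
       (1 / (\<phi> (snd q1) - \<phi> (snd q2))) *\<^sub>R ((- \<phi> (snd q2)) *\<^sub>R snd q1 + \<phi> (snd q1) *\<^sub>R snd q2))) mi) pl)"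
  define zer where "zer = concat (map (\<lambda>q0. map (\<lambda>q1.
      (bpoly_scale (\<phi> (snd q1)) (bpoly_mult (fst q0) (fst q1)), snd q0)) pl) ze)"
  have key: "(\<Sum>q\<leftarrow>F. bpoly_eval (fst q) x * \<phi> (snd q)) = 0" if "x \<in> X" "a \<bullet> x = b" for x
  proof -
    have "(\<Sum>q\<leftarrow>F. bpoly_eval (fst q) x * \<phi> (snd q)) = (\<Sum>q\<leftarrow>F. a \<bullet> (bpoly_eval (fst q) x *\<^sub>R (snd q - x)))"
      unfolding \<phi>_def using that(2)
      by (intro arg_cong[where f=sum_list] map_cong) (auto simp: inner_diff_right)
    also have "\<dots> = a \<bullet> fsum F x" unfolding fsum_def sl_inner ..
    finally show ?thesis using id that by simp
  qed
  have split: "(\<Sum>q\<leftarrow>F. bpoly_eval (fst q) x * \<phi> (snd q)) =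
      (\<Sum>q\<leftarrow>pl. bpoly_eval (fst q) x * \<phi> (snd q)) + (\<Sum>q\<leftarrow>mi. bpoly_eval (fst q) x * \<phi> (snd q))"
    for x
  proof -
    have "(\<Sum>q\<leftarrow>ze. bpoly_eval (fst q) x * \<phi> (snd q)) = 0"
      unfolding ze_def by (rule sl_zero) auto
    then show ?thesis unfolding pl_def mi_def
      using sl_filter3[of "\<lambda>q. bpoly_eval (fst q) x * \<phi> (snd q)" F "\<lambda>q. \<phi> (snd q)"]
      unfolding ze_def by simp
  qed
  have plpos: "pl \<noteq> [] \<Longrightarrow> x \<in> X \<Longrightarrow> (\<Sum>q\<leftarrow>pl. bpoly_eval (fst q) x * \<phi> (snd q)) > 0" for x
    by (rule sl_pos) (use F X in \<open>auto simp: pl_def intro!: mult_pos_pos pos_poly_eval\<close>)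
  have mineg: "mi \<noteq> [] \<Longrightarrow> x \<in> X \<Longrightarrow> (\<Sum>q\<leftarrow>mi. bpoly_eval (fst q) x * - \<phi> (snd q)) > 0" for x
    by (rule sl_pos) (use F X in \<open>auto simp: mi_def intro!: mult_pos_neg pos_poly_eval\<close>)
  show ?thesis
  proof (cases "pl = [] \<or> mi = []")
    case True
    show ?thesis
    proof (cases "pl = [] \<and> mi = []")
      case True
      then have "\<forall>q\<in>set F. \<phi> (snd q) = 0"
        unfolding pl_def mi_def filter_empty_conv by (metis linorder_neqE_linordered_idom)
      then show ?thesis using F id unfolding \<phi>_def by (intro exI[of _ F]) auto
    next
      case False
      have "\<not> (x \<in> X \<and> a \<bullet> x = b)" for x
      proof
        assume x: "x \<in> X \<and> a \<bullet> x = b"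
        show False
        proof (cases "pl = []")
          case True
          then have "mi \<noteq> []" using False by auto
          then show False using key[of x] split[of x] mineg[of x] x True
            by (simp add: sl_neg sl_uminus)
        next
          case False
          then have "mi = []" using \<open>pl = [] \<or> mi = []\<close> by auto
          then show False using key[of x] split[of x] plpos[of x] x False
            by simp
        qed
      qed
      then show ?thesis by (intro exI[of _ "[]"]) auto
    qed
  next
    case False
    then have ne: "pl \<noteq> []" "mi \<noteq> []" by auto
    have mi_neg: "\<phi> (snd q) < 0" "q \<in> set F" if "q \<in> set mi" for q using that unfolding mi_def by auto
    have pl_pos: "\<phi> (snd q) > 0" "q \<in> set F" if "q \<in> set pl" for q using that unfolding pl_def by auto
    have ze0: "\<phi> (snd q) = 0" "q \<in> set F" if "q \<in> set ze" for q using that unfolding ze_def by auto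
    have G1: "pos_poly (fst q) \<and> snd q \<in> S \<and> a \<bullet> snd q = b" if "q \<in> set pairs" for q
    proof -
      from that obtain q1 q2 where q1: "q1 \<in> set pl" and q2: "q2 \<in> set mi" and
        q: "q = (bpoly_scale (\<phi> (snd q1) - \<phi> (snd q2)) (bpoly_mult (fst q1) (fst q2)),
          (1 / (\<phi> (snd q1) - \<phi> (snd q2))) *\<^sub>R ((- \<phi> (snd q2)) *\<^sub>R snd q1 + \<phi> (snd q1) *\<^sub>R snd q2))"
        unfolding pairs_def by auto
      define p1 where "p1 = \<phi> (snd q1)"
      define p2 where "p2 = \<phi> (snd q2)"
      have p1: "p1 > 0" using pl_pos[OF q1] p1_def by simp
      have p2: "p2 < 0" using mi_neg[OF q2] p2_def by simp
      have pp: "pos_poly (fst q1)" "pos_poly (fst q2)" "snd q1 \<in> S" "snd q2 \<in> S"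
        using F pl_pos(2)[OF q1] mi_neg(2)[OF q2] by auto
      have "pos_poly (fst q)" unfolding q using pp p1 p2 p1_def p2_def
        by (auto intro!: pos_poly_scale pos_poly_mult)
      moreover have "snd q = (- p2 / (p1 - p2)) *\<^sub>R snd q1 + (p1 / (p1 - p2)) *\<^sub>R snd q2"
        unfolding q p1_def p2_def by (simp add: scaleR_add_right scaleR_diff_right divide_inverse_commute)
      moreover have "(- p2 / (p1 - p2)) *\<^sub>R snd q1 + (p1 / (p1 - p2)) *\<^sub>R snd q2 \<in> S"
      proof (rule convexD[OF S pp(3) pp(4)])
        show "0 \<le> - p2 / (p1 - p2)" "0 \<le> p1 / (p1 - p2)" using p1 p2 by (auto intro: divide_nonpos_pos)
        have "p1 - p2 \<noteq> 0" using p1 p2 by simp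
        have "- p2 / (p1 - p2) + p1 / (p1 - p2) = (- p2 + p1) / (p1 - p2)"
          by (rule add_divide_distrib[symmetric])
        also have "\<dots> = 1" using \<open>p1 - p2 \<noteq> 0\<close> by simp
        finally show "- p2 / (p1 - p2) + p1 / (p1 - p2) = 1" .
      qed
      moreover have "a \<bullet> ((- p2 / (p1 - p2)) *\<^sub>R snd q1 + (p1 / (p1 - p2)) *\<^sub>R snd q2) = b"
      proof -
        have "a \<bullet> snd q1 = p1 + b" "a \<bullet> snd q2 = p2 + b" unfolding p1_def p2_def \<phi>_def by auto
        moreover have "a \<bullet> ((- p2 / (p1 - p2)) *\<^sub>R snd q1 + (p1 / (p1 - p2)) *\<^sub>R snd q2) =
            (- p2 / (p1 - p2)) * (a \<bullet> snd q1) + (p1 / (p1 - p2)) * (a \<bullet> snd q2)"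
          unfolding inner_add_right inner_scaleR_right ..
        moreover have "(- p2 / (p1 - p2)) * (p1 + b) + (p1 / (p1 - p2)) * (p2 + b) = b"
        proof -
          have h: "p1 \<noteq> p2" using p1 p2 by simp
          have "(- p2 / (p1 - p2)) * (p1 + b) + (p1 / (p1 - p2)) * (p2 + b) = ((- p2) * (p1 + b) + p1 * (p2 + b)) / (p1 - p2)"
            by (simp add: add_divide_distrib diff_divide_distrib)
          also have "(- p2) * (p1 + b) + p1 * (p2 + b) = b * (p1 - p2)" by (simp add: algebra_simps)
          finally show ?thesis using h by simp
        qed
        ultimately show ?thesis by simp
      qed
      ultimately show ?thesis by simp
    qed
    have G2: "pos_poly (fst q) \<and> snd q \<in> S \<and> a \<bullet> snd q = b" if "q \<in> set zer" for q
    proof -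
      from that obtain q0 q1 where q0: "q0 \<in> set ze" and q1: "q1 \<in> set pl" and
        q: "q = (bpoly_scale (\<phi> (snd q1)) (bpoly_mult (fst q0) (fst q1)), snd q0)"
        unfolding zer_def by auto
      show ?thesis unfolding q using F ze0[OF q0] pl_pos[OF q1]
        by (auto intro!: pos_poly_scale pos_poly_mult simp: \<phi>_def)
    qed
    have "pairs \<noteq> []" using ne unfolding pairs_def by (cases pl; cases mi) auto
    moreover have "fsum (pairs @ zer) x = 0" if "x \<in> X" "a \<bullet> x = b" for x
      unfolding pairs_def zer_def pl_def mi_def ze_def \<phi>_def
      by (rule pair_identity) (use that id in auto)
    ultimately show ?thesis using G1 G2 by (intro exI[of _ "pairs @ zer"]) auto
  qed
qed


section \<open>The cube family\<close>

definition cube_mono :: "('n::finite \<Rightarrow> bool) \<Rightarrow> 'n bmono" where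
  "cube_mono u = (\<lambda>i. if u i then 1 else 0, \<lambda>i. if u i then 0 else 1)"

definition cube_pt :: "('n::finite \<Rightarrow> bool) \<Rightarrow> real^'n" where
  "cube_pt u = (\<chi> i. if u i then 1 else 0)"

lemma cube_weight:
  fixes x :: "real^'n::finite"
  assumes "x \<in> unit_cube"
  shows "bmono_eval (cube_mono u) x = pmf (Pi_pmf UNIV False (\<lambda>i. bernoulli_pmf (x$i))) u"
proof -
  have "pmf (Pi_pmf UNIV False (\<lambda>i. bernoulli_pmf (x$i))) u = (\<Prod>i\<in>UNIV. pmf (bernoulli_pmf (x$i)) (u i))"
    by (rule pmf_Pi') auto
  also have "\<dots> = bmono_eval (cube_mono u) x"
    unfolding bmono_eval_def cube_mono_def using assms
    by (intro prod.cong refl) (auto simp: unit_cube_def)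
  finally show ?thesis by simp
qed

lemma cube_family:
  "\<exists>F :: ('n::finite bpoly \<times> (real^'n)) list. (\<forall>q\<in>set F. pos_poly (fst q) \<and> snd q \<in> unit_cube) \<and>
      (\<forall>x\<in>unit_open_cube. F \<noteq> [] \<and> fsum F x = 0)"
proof -
  obtain us :: "('n \<Rightarrow> bool) list" where us: "distinct us" "set us = UNIV"
    using finite_distinct_list[of "UNIV :: ('n \<Rightarrow> bool) set"] by auto
  define F where "F = map (\<lambda>u. ([(1::real, cube_mono u)], cube_pt u)) us"
  have P: "\<forall>q\<in>set F. pos_poly (fst q) \<and> snd q \<in> unit_cube"
    unfolding F_def pos_poly_def is_bernstein_poly_def unit_cube_def cube_pt_def by auto
  have "F \<noteq> []" using us unfolding F_def by auto
  moreover have "fsum F x = 0" if x: "x \<in> unit_open_cube" for x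
  proof -
    have xc: "x \<in> unit_cube" using x unfolding unit_cube_def unit_open_cube_def by (auto simp: less_imp_le)
    define Q where "Q = Pi_pmf UNIV False (\<lambda>i. bernoulli_pmf (x$i))"
    have "fsum F x = (\<Sum>u\<in>UNIV. pmf Q u *\<^sub>R (cube_pt u - x))"
      unfolding fsum_def F_def Q_def using us
      by (simp add: comp_def bpoly_eval_def cube_weight[OF xc] sum_list_distinct_conv_sum_set)
    also have "\<dots> = 0"
    proof (subst vec_eq_iff, intro allI)
      fix j
      have s1: "(\<Sum>u\<in>UNIV. pmf Q u) = 1" by (rule sum_pmf_eq_1) auto
      have "(\<Sum>u\<in>UNIV. pmf Q u * (if u j then 1 else 0)) = (\<Sum>u\<in>UNIV. if u j then pmf Q u else 0)"
        by (intro sum.cong) auto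
      also have "\<dots> = (\<Sum>u\<in>{u. u j}. pmf Q u)"
        using sum.inter_filter[of UNIV "pmf Q" "\<lambda>u. u j"] by simp
      also have "\<dots> = measure_pmf.prob Q {u. u j}"
        by (rule measure_measure_pmf_finite[symmetric]) auto
      also have "\<dots> = measure_pmf.prob (map_pmf (\<lambda>u. u j) Q) {True}"
        by (simp add: measure_map_pmf vimage_def)
      also have "map_pmf (\<lambda>u. u j) Q = bernoulli_pmf (x$j)"
        unfolding Q_def by (subst Pi_pmf_component) auto
      also have "measure_pmf.prob (bernoulli_pmf (x$j)) {True} = x$j"
        using xc by (simp add: measure_pmf_single unit_cube_def)
      finally have s2: "(\<Sum>u\<in>UNIV. pmf Q u * (if u j then 1 else 0)) = x$j" .
      have "(\<Sum>u\<in>UNIV. pmf Q u *\<^sub>R (cube_pt u - x)) $ j = (\<Sum>u\<in>UNIV. pmf Q u * (if u j then 1 else 0)) - x$j * (\<Sum>u\<in>UNIV. pmf Q u)"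
        unfolding sum_component cube_pt_def
        by (simp add: algebra_simps sum_subtractf sum_distrib_left)
      then show "(\<Sum>u\<in>UNIV. pmf Q u *\<^sub>R (cube_pt u - x)) $ j = 0 $ j"
        using s1 s2 by simp
    qed
    finally show ?thesis .
  qed
  ultimately show ?thesis using P by blast
qed


lemma convex_slice:
  "convex (unit_cube \<inter> {z::real^'n::finite. \<forall>h\<in>set hs. fst h \<bullet> z = snd h})"
proof (rule convexI)
  fix x y :: "real^'n" and u v :: real
  assume x: "x \<in> unit_cube \<inter> {z. \<forall>h\<in>set hs. fst h \<bullet> z = snd h}"
     and y: "y \<in> unit_cube \<inter> {z. \<forall>h\<in>set hs. fst h \<bullet> z = snd h}"
     and uv: "0 \<le> u" "0 \<le> v" "u + v = 1"
  have c: "0 \<le> u * x$i + v * y$i \<and> u * x$i + v * y$i \<le> 1" for i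
  proof -
    have "0 \<le> x$i" "x$i \<le> 1" "0 \<le> y$i" "y$i \<le> 1" using x y by (auto simp: unit_cube_def)
    then have "u * x$i \<le> u" "v * y$i \<le> v" "0 \<le> u * x$i" "0 \<le> v * y$i"
      using uv by (auto intro: mult_left_le mult_nonneg_nonneg)
    then show ?thesis using uv by linarith
  qed
  have "fst h \<bullet> (u *\<^sub>R x + v *\<^sub>R y) = snd h" if "h \<in> set hs" for h
  proof -
    have "fst h \<bullet> (u *\<^sub>R x + v *\<^sub>R y) = u * (fst h \<bullet> x) + v * (fst h \<bullet> y)"
      unfolding inner_add_right inner_scaleR_right ..
    also have "\<dots> = (u + v) * snd h" using x y that by (auto simp: algebra_simps)
    finally show ?thesis using uv by simp
  qed
  then show "u *\<^sub>R x + v *\<^sub>R y \<in> unit_cube \<inter> {z. \<forall>h\<in>set hs. fst h \<bullet> z = snd h}"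
    using c by (auto simp: unit_cube_def)
qed

lemma family_hyps:
  "\<exists>F :: ('n::finite bpoly \<times> (real^'n)) list.
     (\<forall>q\<in>set F. pos_poly (fst q) \<and> snd q \<in> unit_cube \<and> (\<forall>h\<in>set hs. fst h \<bullet> snd q = snd h)) \<and>
     (\<forall>x\<in>unit_open_cube. (\<forall>h\<in>set hs. fst h \<bullet> x = snd h) \<longrightarrow> F \<noteq> [] \<and> fsum F x = 0)"
proof (induct hs)
  case Nil
  then show ?case using cube_family by auto
next
  case (Cons h hs)
  then obtain F :: "('n bpoly \<times> (real^'n)) list" where
    H1: "\<forall>q\<in>set F. pos_poly (fst q) \<and> snd q \<in> unit_cube \<and> (\<forall>h\<in>set hs. fst h \<bullet> snd q = snd h)" and
    H2: "\<forall>x\<in>unit_open_cube. (\<forall>h\<in>set hs. fst h \<bullet> x = snd h) \<longrightarrow> F \<noteq> [] \<and> fsum F x = 0"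
    by blast
  have F1: "\<forall>q\<in>set F. pos_poly (fst q) \<and> snd q \<in> unit_cube \<inter> {z. \<forall>h\<in>set hs. fst h \<bullet> z = snd h}"
    using H1 by blast
  have F2: "\<forall>x\<in>unit_open_cube \<inter> {z. \<forall>h\<in>set hs. fst h \<bullet> z = snd h}. F \<noteq> [] \<and> fsum F x = 0"
    using H2 by blast
  obtain G :: "('n bpoly \<times> (real^'n)) list" where
    G1: "\<forall>q\<in>set G. pos_poly (fst q) \<and> snd q \<in> unit_cube \<inter> {z. \<forall>h\<in>set hs. fst h \<bullet> z = snd h} \<and> fst h \<bullet> snd q = snd h" and
    G2: "\<forall>x\<in>unit_open_cube \<inter> {z. \<forall>h\<in>set hs. fst h \<bullet> z = snd h}. fst h \<bullet> x = snd h \<longrightarrow> G \<noteq> [] \<and> fsum G x = 0"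
    using pair_step[OF F1 convex_slice _ F2, of "fst h" "snd h"] by auto
  show ?case
    by (rule exI[of _ G]) (use G1 G2 in auto)
qed

section \<open>From points to vertices\<close>

lemma unit_cube_cbox: "unit_cube = cbox (0::real^'n::finite) 1"
  unfolding unit_cube_def by (auto simp: mem_box_cart)

lemma bpoly_eval_append: "bpoly_eval (p @ q) x = bpoly_eval p x + bpoly_eval q x"
  unfolding bpoly_eval_alt by simp

lemma bpoly_eval_concat: "bpoly_eval (concat ps) x = (\<Sum>p\<leftarrow>ps. bpoly_eval p x)"
  by (induct ps) (auto simp: bpoly_eval_append bpoly_eval_alt)

lemma sum_sl_swap: "(\<Sum>v\<in>V. \<Sum>q\<leftarrow>F. f v q) = (\<Sum>q\<leftarrow>F. \<Sum>v\<in>V. (f v q :: 'a::comm_monoid_add))"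
  by (induct F) (auto simp: sum.distrib)

lemma hyperplanes_list:
  fixes H :: "(real^'n::finite) set"
  assumes "affine H"
  obtains hs :: "((real^'n) \<times> real) list" where "H = {z. \<forall>h\<in>set hs. fst h \<bullet> z = snd h}"
proof -
  obtain \<F> where F: "finite \<F>" "affine hull H = \<Inter>\<F>"
      "\<And>h. h \<in> \<F> \<Longrightarrow> \<exists>a b. a \<noteq> 0 \<and> h = {x. a \<bullet> x = b}"
  proof -
    from affine_hull_finite_intersection_hyperplanes[of H]
    obtain \<G> where "finite \<G>" "affine hull H = \<Inter>\<G>"
      "\<And>h. h \<in> \<G> \<Longrightarrow> \<exists>a b. a \<noteq> 0 \<and> h = {x. a \<bullet> x = b}"
      by metis
    then show ?thesis using that by metis
  qed
  have "affine hull H = H" using assms by (simp add: affine_hull_eq)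
  then have HF: "H = \<Inter>\<F>" using F(2) by simp
  have "\<forall>h\<in>\<F>. \<exists>ab. \<forall>x. x \<in> h \<longleftrightarrow> fst ab \<bullet> x = snd ab"
  proof
    fix h assume "h \<in> \<F>"
    then obtain a b where "h = {x. a \<bullet> x = b}" using F(3) by blast
    then show "\<exists>ab. \<forall>x. x \<in> h \<longleftrightarrow> fst ab \<bullet> x = snd ab"
      by (intro exI[of _ "(a,b)"]) simp
  qed
  from bchoice[OF this] obtain g where g: "\<forall>h\<in>\<F>. \<forall>x. x \<in> h \<longleftrightarrow> fst (g h) \<bullet> x = snd (g h)"
    by blast
  obtain L where L: "set L = \<F>" using finite_list[OF F(1)] by blast
  define hs where "hs = map g L"
  have "z \<in> \<Inter>\<F> \<longleftrightarrow> (\<forall>h\<in>set hs. fst h \<bullet> z = snd h)" for z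
    unfolding hs_def set_map L using g by auto
  then have "H = {z. \<forall>h\<in>set hs. fst h \<bullet> z = snd h}" unfolding HF by blast
  then show ?thesis by (rule that)
qed

lemma fsum_alt: "fsum F x = (\<Sum>q\<leftarrow>F. bpoly_eval (fst q) x *\<^sub>R snd q) - (\<Sum>q\<leftarrow>F. bpoly_eval (fst q) x) *\<^sub>R x"
  unfolding fsum_def by (induct F) (simp_all add: algebra_simps)

lemma core:
  fixes H :: "(real ^ 'n::finite) set"
  assumes "affine H"
  defines "Pol \<equiv> unit_cube \<inter> H"
  defines "V \<equiv> {v. v extreme_point_of Pol}"
  shows "finite V \<and> (\<exists>P :: real ^ 'n \<Rightarrow> 'n bpoly. (\<forall>v\<in>V. is_bernstein_poly (P v)) \<and>
     (\<forall>x\<in>Pol \<inter> unit_open_cube. V \<noteq> {} \<and> (\<Sum>v\<in>V. bpoly_eval (P v) x) > 0 \<and>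
        (\<Sum>v\<in>V. bpoly_eval (P v) x *\<^sub>R v) = (\<Sum>v\<in>V. bpoly_eval (P v) x) *\<^sub>R x))"
proof -
  have polyh: "polyhedron Pol" unfolding Pol_def unit_cube_cbox
    using assms(1) by (intro polyhedron_Int polyhedron_interval affine_imp_polyhedron) auto
  have "bounded Pol" unfolding Pol_def unit_cube_cbox by (rule bounded_subset[OF bounded_cbox]) auto
  then have poly: "polytope Pol" using polyh by (simp add: polytope_eq_bounded_polyhedron)
  have finV: "finite V" unfolding V_def by (rule finite_polyhedron_extreme_points[OF polyh])
  have PolV: "Pol = convex hull V" unfolding V_def
    by (rule Krein_Milman_Minkowski[OF polytope_imp_compact[OF poly] polytope_imp_convex[OF poly]])
  obtain hs :: "((real^'n) \<times> real) list" where hs: "H = {z. \<forall>h\<in>set hs. fst h \<bullet> z = snd h}"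
    using hyperplanes_list[OF assms(1)] by blast
  obtain F :: "('n bpoly \<times> (real^'n)) list" where
    F1: "\<forall>q\<in>set F. pos_poly (fst q) \<and> snd q \<in> unit_cube \<and> (\<forall>h\<in>set hs. fst h \<bullet> snd q = snd h)" and
    F2: "\<forall>x\<in>unit_open_cube. (\<forall>h\<in>set hs. fst h \<bullet> x = snd h) \<longrightarrow> F \<noteq> [] \<and> fsum F x = 0"
    using family_hyps[of hs] by blast
  have FP: "snd q \<in> Pol" if "q \<in> set F" for q
  proof -
    have a: "snd q \<in> unit_cube" "\<forall>h\<in>set hs. fst h \<bullet> snd q = snd h" using F1 that by auto
    have "snd q \<in> H" unfolding hs using a(2) by simp
    then show ?thesis using a(1) unfolding Pol_def by blast
  qed
  have "\<forall>z\<in>Pol. \<exists>u. (\<forall>v\<in>V. 0 \<le> u v) \<and> sum u V = 1 \<and> (\<Sum>v\<in>V. u v *\<^sub>R v) = z"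
  proof
    fix z assume "z \<in> Pol"
    then have "z \<in> convex hull V" using PolV by simp
    then show "\<exists>u. (\<forall>v\<in>V. 0 \<le> u v) \<and> sum u V = 1 \<and> (\<Sum>v\<in>V. u v *\<^sub>R v) = z"
      unfolding convex_hull_finite[OF finV] by simp
  qed
  from bchoice[OF this] obtain \<theta> where \<theta>0: "\<forall>z\<in>Pol. (\<forall>v\<in>V. 0 \<le> \<theta> z v) \<and> sum (\<theta> z) V = 1 \<and> (\<Sum>v\<in>V. \<theta> z v *\<^sub>R v) = z"
    by blast
  have \<theta>: "\<And>z. z \<in> Pol \<Longrightarrow> (\<forall>v\<in>V. 0 \<le> \<theta> z v) \<and> sum (\<theta> z) V = 1 \<and> (\<Sum>v\<in>V. \<theta> z v *\<^sub>R v) = z"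
    using \<theta>0 by blast
  define P where "P v = concat (map (\<lambda>q. if \<theta> (snd q) v > 0 then bpoly_scale (\<theta> (snd q) v) (fst q) else []) F)" for v
  have Pb: "is_bernstein_poly (P v)" for v
  proof -
    have "fst t > 0" if "t \<in> set (P v)" for t
    proof -
      from that obtain q where q: "q \<in> set F" "\<theta> (snd q) v > 0" "t \<in> set (bpoly_scale (\<theta> (snd q) v) (fst q))"
        unfolding P_def by (auto split: if_splits)
      have "pos_poly (bpoly_scale (\<theta> (snd q) v) (fst q))"
        using F1 q by (auto intro: pos_poly_scale)
      then show ?thesis using q(3) unfolding pos_poly_def is_bernstein_poly_def by auto
    qed
    then show ?thesis unfolding is_bernstein_poly_def by auto
  qed
  have Pe: "bpoly_eval (P v) x = (\<Sum>q\<leftarrow>F. \<theta> (snd q) v * bpoly_eval (fst q) x)" if "v \<in> V" for v x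
    unfolding P_def bpoly_eval_concat map_map comp_def
  proof (intro arg_cong[where f=sum_list] map_cong refl)
    fix q assume q: "q \<in> set F"
    have "\<theta> (snd q) v \<ge> 0" using \<theta>[OF FP[OF q]] that by auto
    then show "bpoly_eval (if \<theta> (snd q) v > 0 then bpoly_scale (\<theta> (snd q) v) (fst q) else []) x =
        \<theta> (snd q) v * bpoly_eval (fst q) x"
      by (auto simp: bpoly_eval_scale) (simp add: bpoly_eval_def)
  qed
  have main: "V \<noteq> {} \<and> (\<Sum>v\<in>V. bpoly_eval (P v) x) > 0 \<and>
        (\<Sum>v\<in>V. bpoly_eval (P v) x *\<^sub>R v) = (\<Sum>v\<in>V. bpoly_eval (P v) x) *\<^sub>R x"
    if x: "x \<in> Pol \<inter> unit_open_cube" for x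
  proof -
    have "x \<in> H" using x unfolding Pol_def by blast
    then have xh: "\<forall>h\<in>set hs. fst h \<bullet> x = snd h" unfolding hs by simp
    have Fne: "F \<noteq> []" and F0: "fsum F x = 0" using F2 x xh by auto
    have "V \<noteq> {}"
    proof
      assume "V = {}"
      then have "Pol = {}" using PolV by simp
      then show False using x by simp
    qed
    have S1: "(\<Sum>v\<in>V. bpoly_eval (P v) x) = (\<Sum>q\<leftarrow>F. bpoly_eval (fst q) x)"
    proof -
      have "(\<Sum>v\<in>V. bpoly_eval (P v) x) = (\<Sum>v\<in>V. \<Sum>q\<leftarrow>F. \<theta> (snd q) v * bpoly_eval (fst q) x)"
        using Pe by simp
      also have "\<dots> = (\<Sum>q\<leftarrow>F. \<Sum>v\<in>V. \<theta> (snd q) v * bpoly_eval (fst q) x)" by (rule sum_sl_swap)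
      also have "\<dots> = (\<Sum>q\<leftarrow>F. bpoly_eval (fst q) x)"
      proof (intro arg_cong[where f=sum_list] map_cong refl)
        fix q assume "q \<in> set F"
        then show "(\<Sum>v\<in>V. \<theta> (snd q) v * bpoly_eval (fst q) x) = bpoly_eval (fst q) x"
          using \<theta>[OF FP] by (simp add: sum_distrib_right[symmetric])
      qed
      finally show ?thesis .
    qed
    have S2: "(\<Sum>v\<in>V. bpoly_eval (P v) x *\<^sub>R v) = (\<Sum>q\<leftarrow>F. bpoly_eval (fst q) x *\<^sub>R snd q)"
    proof -
      have "(\<Sum>v\<in>V. bpoly_eval (P v) x *\<^sub>R v) = (\<Sum>v\<in>V. \<Sum>q\<leftarrow>F. (\<theta> (snd q) v * bpoly_eval (fst q) x) *\<^sub>R v)"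
        using Pe by (simp add: sl_scaleR_left)
      also have "\<dots> = (\<Sum>q\<leftarrow>F. \<Sum>v\<in>V. (\<theta> (snd q) v * bpoly_eval (fst q) x) *\<^sub>R v)" by (rule sum_sl_swap)
      also have "\<dots> = (\<Sum>q\<leftarrow>F. bpoly_eval (fst q) x *\<^sub>R snd q)"
      proof (intro arg_cong[where f=sum_list] map_cong refl)
        fix q assume q: "q \<in> set F"
        have "(\<Sum>v\<in>V. (\<theta> (snd q) v * bpoly_eval (fst q) x) *\<^sub>R v) = bpoly_eval (fst q) x *\<^sub>R (\<Sum>v\<in>V. \<theta> (snd q) v *\<^sub>R v)"
          by (simp add: scaleR_sum_right mult.commute)
        then show "(\<Sum>v\<in>V. (\<theta> (snd q) v * bpoly_eval (fst q) x) *\<^sub>R v) = bpoly_eval (fst q) x *\<^sub>R snd q"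
          using \<theta>[OF FP[OF q]] by simp
      qed
      finally show ?thesis .
    qed
    have "fsum F x = (\<Sum>q\<leftarrow>F. bpoly_eval (fst q) x *\<^sub>R snd q) - (\<Sum>q\<leftarrow>F. bpoly_eval (fst q) x) *\<^sub>R x"
      by (rule fsum_alt)
    then have S3: "(\<Sum>q\<leftarrow>F. bpoly_eval (fst q) x *\<^sub>R snd q) = (\<Sum>q\<leftarrow>F. bpoly_eval (fst q) x) *\<^sub>R x"
      using F0 by simp
    have xo: "x \<in> unit_open_cube" using x by blast
    have "\<forall>q\<in>set F. bpoly_eval (fst q) x > 0" using F1 pos_poly_eval[OF _ xo] by blast
    then have pos: "(\<Sum>q\<leftarrow>F. bpoly_eval (fst q) x) > 0"
      using Fne by (intro sl_pos)
    show ?thesis unfolding S1 S2 S3 using pos \<open>V \<noteq> {}\<close> by blast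
  qed
  have "(\<forall>v\<in>V. is_bernstein_poly (P v)) \<and>
     (\<forall>x\<in>Pol \<inter> unit_open_cube. V \<noteq> {} \<and> (\<Sum>v\<in>V. bpoly_eval (P v) x) > 0 \<and>
        (\<Sum>v\<in>V. bpoly_eval (P v) x *\<^sub>R v) = (\<Sum>v\<in>V. bpoly_eval (P v) x) *\<^sub>R x)"
  proof (rule conjI)
    show "\<forall>v\<in>V. is_bernstein_poly (P v)" using Pb by (intro ballI)
    show "\<forall>x\<in>Pol \<inter> unit_open_cube. V \<noteq> {} \<and> (\<Sum>v\<in>V. bpoly_eval (P v) x) > 0 \<and>
        (\<Sum>v\<in>V. bpoly_eval (P v) x *\<^sub>R v) = (\<Sum>v\<in>V. bpoly_eval (P v) x) *\<^sub>R x"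
      by (intro ballI) (rule main)
  qed
  then have E: "\<exists>P :: real ^ 'n \<Rightarrow> 'n bpoly. (\<forall>v\<in>V. is_bernstein_poly (P v)) \<and>
     (\<forall>x\<in>Pol \<inter> unit_open_cube. V \<noteq> {} \<and> (\<Sum>v\<in>V. bpoly_eval (P v) x) > 0 \<and>
        (\<Sum>v\<in>V. bpoly_eval (P v) x *\<^sub>R v) = (\<Sum>v\<in>V. bpoly_eval (P v) x) *\<^sub>R x)"
    by (rule exI[where x=P])
  show ?thesis using finV E by (rule conjI)
qed

definition csum :: "(real \<times> 'm) list \<Rightarrow> real" where
  "csum ps = (\<Sum>t\<leftarrow>ps. fst t)"

lemma coeff_sum_csum: "coeff_sum p = csum p"
  unfolding coeff_sum_def csum_def by (simp add: split_def)

lemma coeff_sum_cons: "csum (t # ps) = fst t + csum ps"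
  unfolding csum_def by simp

lemma coeff_sum_pos: "\<forall>t\<in>set ps. fst t > 0 \<Longrightarrow> ps \<noteq> [] \<Longrightarrow> csum ps > 0"
  unfolding csum_def by (simp add: sl_pos)

lemma select_alg1:
  fixes C c S R k0 k1 :: real
  assumes C: "C > 0" and D: "C - c > 0"
  shows "c / C * k1 + (1 - c / C) * (S / (C - c) + (1 - R / (C - c)) * k0) = (c * k1 + S) / C + (1 - (c + R) / C) * k0"
proof -
  have e1: "1 - c/C = (C - c)/C" using C by (simp add: diff_divide_distrib)
  have e2: "(C - c)/C * (S/(C-c) + (1 - R/(C-c)) * k0) = (S + (C - c - R) * k0)/C"
  proof -
    have f1: "(C - c) * (S/(C-c)) = S" using D by simp
    have f2: "(C - c) * (1 - R/(C-c)) = C - c - R" using D by (simp add: right_diff_distrib)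
    have "(C - c) * (S/(C-c) + (1 - R/(C-c)) * k0) = (C - c) * (S/(C-c)) + ((C - c) * (1 - R/(C-c))) * k0"
      by (simp only: distrib_left mult.assoc)
    then have "(C - c) * (S/(C-c) + (1 - R/(C-c)) * k0) = S + (C - c - R) * k0"
      unfolding f1 f2 .
    then show ?thesis by (metis times_divide_eq_left)
  qed
  have e3: "1 - (c + R) / C = (C - c - R) / C" using C by (simp add: diff_divide_distrib add_divide_distrib)
  show ?thesis unfolding e1 e2 e3 by (simp add: add_divide_distrib diff_divide_distrib algebra_simps)
qed
lemma select_alg0:
  fixes C c k0 k1 :: real
  assumes C: "C > 0" "c \<le> C"
  shows "c / C * k1 + (1 - c / C) * (0 / (C - c) + (1 - 0 / (C - c)) * k0) = (c * k1 + 0) / C + (1 - (c + 0) / C) * k0"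
  by (simp add: algebra_simps)

lemma select_bind:
  fixes ps :: "(real \<times> 'm) list" and K :: "'m option \<Rightarrow> 'b pmf"
  assumes "\<forall>t\<in>set ps. fst t > 0" "csum ps \<le> C"
  shows "pmf (bind_pmf (select_monomial C ps) K) a =
     (\<Sum>t\<leftarrow>ps. fst t * pmf (K (Some (snd t))) a) / C + (1 - csum ps / C) * pmf (K None) a"
  using assms
proof (induct ps arbitrary: C)
  case Nil
  then show ?case by (simp add: csum_def bind_return_pmf)
next
  case (Cons t ms)
  obtain c m where t: "t = (c, m)" by (cases t)
  have c: "c > 0" using Cons.prems t by auto
  have ms: "\<forall>t\<in>set ms. fst t > 0" using Cons.prems by auto
  have R0: "csum ms \<ge> 0"
    using ms by (cases "ms = []") (auto simp: csum_def dest: coeff_sum_pos[OF ms])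
  have Cc: "c + csum ms \<le> C" using Cons.prems t by (simp add: coeff_sum_cons)
  then have C: "C > 0" "c / C \<le> 1" "0 \<le> c / C" using c R0 by auto
  define k1 where "k1 = pmf (K (Some m)) a"
  define k0 where "k0 = pmf (K None) a"
  define S where "S = (\<Sum>t\<leftarrow>ms. fst t * pmf (K (Some (snd t))) a)"
  define R where "R = csum ms"
  have IH: "pmf (bind_pmf (select_monomial (C - c) ms) K) a = S / (C - c) + (1 - R / (C - c)) * k0"
    using Cons.hyps[OF ms] Cc unfolding S_def R_def k0_def by simp
  have "pmf (bind_pmf (select_monomial C (t # ms)) K) a =
        c / C * k1 + (1 - c / C) * pmf (bind_pmf (select_monomial (C - c) ms) K) a"
    unfolding t by (simp add: bind_assoc_pmf bind_return_pmf pmf_bind C k1_def)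
  also have "\<dots> = (c * k1 + S) / C + (1 - (c + R) / C) * k0"
  proof (cases "ms = []")
    case True
    then have "S = 0" "R = 0" unfolding S_def R_def csum_def by auto
    then show ?thesis using IH C select_alg0[of C c k1 k0] Cc R_def by simp
  next
    case False
    then have "R > 0" unfolding R_def using coeff_sum_pos[OF ms] by auto
    then have "C - c > 0" using Cc R_def by auto
    then show ?thesis unfolding IH using C by (intro select_alg1)
  qed
  finally show ?case unfolding t S_def R_def k1_def k0_def by (simp add: coeff_sum_cons add_divide_distrib)
qed


lemma flip_pattern_True:
  assumes "0 \<le> p" "p \<le> 1"
  shows "pmf (flip_pattern p ts) True = (\<Prod>t\<leftarrow>ts. if t then p else 1 - p)"
proof (induct ts)
  case Nil then show ?case by simp
next
  case (Cons t ts)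
  have e1: "Collect ((\<and>) True) = {True}" by auto
  have e2: "Collect ((\<and>) False) = {}" by auto
  show ?case
    using assms Cons by (cases t) (simp_all add: pmf_bind pmf_map vimage_def e1 e2 measure_pmf_single)
qed

lemma monomial_test_True:
  assumes x: "x \<in> unit_cube"
  shows "pmf (monomial_test x m) True = bmono_eval m x"
proof -
  define Q where "Q = Pi_pmf UNIV True (\<lambda>i. flip_pattern (x $ i) (replicate (fst m i) True @ replicate (snd m i) False))"
  have "pmf (monomial_test x m) True = measure_pmf.prob Q {f. \<forall>i. f i}"
    unfolding monomial_test_def Q_def pmf_map by (simp add: vimage_def)
  also have "{f. \<forall>i. f i} = {\<lambda>_. True}" by auto
  also have "measure_pmf.prob Q {\<lambda>_. True} = pmf Q (\<lambda>_. True)" by (rule measure_pmf_single)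
  also have "\<dots> = (\<Prod>i\<in>UNIV. pmf (flip_pattern (x $ i) (replicate (fst m i) True @ replicate (snd m i) False)) True)"
    unfolding Q_def by (rule pmf_Pi') auto
  also have "\<dots> = bmono_eval m x"
    unfolding bmono_eval_def
  proof (intro prod.cong refl)
    fix i
    have "0 \<le> x $ i" "x $ i \<le> 1" using x by (auto simp: unit_cube_def)
    then show "pmf (flip_pattern (x $ i) (replicate (fst m i) True @ replicate (snd m i) False)) True =
      x $ i ^ fst m i * (1 - x $ i) ^ snd m i"
      by (simp add: flip_pattern_True prod_list_replicate)
  qed
  finally show ?thesis .
qed


definition rK :: "real^'n \<Rightarrow> real^'n \<Rightarrow> ('n::finite) bmono option \<Rightarrow> (real^'n) option pmf" where
  "rK x v' sel = (case sel of None \<Rightarrow> return_pmf None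
     | Some m \<Rightarrow> map_pmf (\<lambda>ok. if ok then Some v' else None) (monomial_test x m))"

lemma race_round_alt: "race_round V P C x = bind_pmf (pmf_of_set V) (\<lambda>v'. bind_pmf (select_monomial C (P v')) (rK x v'))"
  unfolding race_round_def rK_def ..

lemma rK_None: "rK x v' None = return_pmf None"
  unfolding rK_def by simp

lemma rK_Some: "x \<in> unit_cube \<Longrightarrow> pmf (rK x v' (Some m)) (Some v) = (if v' = v then bmono_eval m x else 0)"
proof -
  assume x: "x \<in> unit_cube"
  have "(\<lambda>ok. if ok then Some v' else None) -` {Some v} = (if v' = v then {True} else {})"
    by (auto split: if_splits)
  then show ?thesis unfolding rK_def using x
    by (simp add: pmf_map measure_pmf_single monomial_test_True)
qed

lemma rK_Some_None: "x \<in> unit_cube \<Longrightarrow> pmf (rK x v' (Some m)) None = 1 - bmono_eval m x"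
proof -
  assume x: "x \<in> unit_cube"
  have "(\<lambda>ok. if ok then Some v' else None) -` {None} = {False}"
    by (auto split: if_splits)
  then show ?thesis unfolding rK_def using x
    by (simp add: pmf_map measure_pmf_single monomial_test_True pmf_False_conv_True)
qed

lemma bern_pos: "is_bernstein_poly p \<Longrightarrow> \<forall>t\<in>set p. fst t > 0"
  unfolding is_bernstein_poly_def by auto

lemma inner_Some:
  assumes "is_bernstein_poly p" "coeff_sum p \<le> C" "x \<in> unit_cube"
  shows "pmf (bind_pmf (select_monomial C p) (rK x v')) (Some v) = (if v' = v then bpoly_eval p x / C else 0)"
proof -
  have "pmf (bind_pmf (select_monomial C p) (rK x v')) (Some v) =
      (\<Sum>t\<leftarrow>p. fst t * pmf (rK x v' (Some (snd t))) (Some v)) / C + (1 - csum p / C) * pmf (rK x v' None) (Some v)"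
    by (rule select_bind) (use assms bern_pos coeff_sum_csum[of p] in auto)
  also have "\<dots> = (\<Sum>t\<leftarrow>p. fst t * (if v' = v then bmono_eval (snd t) x else 0)) / C"
    using assms(3) by (simp add: rK_Some rK_None)
  also have "\<dots> = (if v' = v then bpoly_eval p x / C else 0)"
    by (cases "v' = v") (auto simp: bpoly_eval_alt sl_zero)
  finally show ?thesis .
qed

lemma inner_None:
  assumes "is_bernstein_poly p" "coeff_sum p \<le> C" "x \<in> unit_cube"
  shows "pmf (bind_pmf (select_monomial C p) (rK x v')) None = 1 - bpoly_eval p x / C"
proof -
  have "pmf (bind_pmf (select_monomial C p) (rK x v')) None =
      (\<Sum>t\<leftarrow>p. fst t * pmf (rK x v' (Some (snd t))) None) / C + (1 - csum p / C) * pmf (rK x v' None) None"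
    by (rule select_bind) (use assms bern_pos coeff_sum_csum[of p] in auto)
  also have "\<dots> = (\<Sum>t\<leftarrow>p. fst t - fst t * bmono_eval (snd t) x) / C + (1 - csum p / C)"
    using assms(3) by (simp add: rK_Some_None rK_None right_diff_distrib)
  also have "(\<Sum>t\<leftarrow>p. fst t - fst t * bmono_eval (snd t) x) = csum p - bpoly_eval p x"
    unfolding csum_def bpoly_eval_alt by (induct p) auto
  also have "(csum p - bpoly_eval p x) / C + (1 - csum p / C) = 1 - bpoly_eval p x / C"
    by (simp add: diff_divide_distrib)
  finally show ?thesis .
qed

lemma race_round_Some:
  assumes V: "finite V" "V \<noteq> {}" and P: "\<forall>v\<in>V. is_bernstein_poly (P v)"
    and C: "\<forall>v\<in>V. coeff_sum (P v) \<le> C" and x: "x \<in> unit_cube"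
  shows "pmf (race_round V P C x) (Some v) = (if v \<in> V then bpoly_eval (P v) x / C else 0) / card V"
proof -
  have "pmf (race_round V P C x) (Some v) = (\<Sum>v'\<in>V. pmf (bind_pmf (select_monomial C (P v')) (rK x v')) (Some v)) / card V"
    unfolding race_round_alt pmf_bind by (rule integral_pmf_of_set[OF V(2) V(1)])
  also have "\<dots> = (\<Sum>v'\<in>V. if v' = v then bpoly_eval (P v') x / C else 0) / card V"
    using P C x by (simp add: inner_Some)
  also have "(\<Sum>v'\<in>V. if v' = v then bpoly_eval (P v') x / C else 0) = (if v \<in> V then bpoly_eval (P v) x / C else 0)"
    using V(1) by (simp add: sum.delta')
  finally show ?thesis .
qed

lemma race_round_None:
  assumes V: "finite V" "V \<noteq> {}" and P: "\<forall>v\<in>V. is_bernstein_poly (P v)"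
    and C: "\<forall>v\<in>V. coeff_sum (P v) \<le> C" and x: "x \<in> unit_cube"
  shows "pmf (race_round V P C x) None = 1 - (\<Sum>w\<in>V. bpoly_eval (P w) x / C) / card V"
proof -
  have "pmf (race_round V P C x) None = (\<Sum>v'\<in>V. pmf (bind_pmf (select_monomial C (P v')) (rK x v')) None) / card V"
    unfolding race_round_alt pmf_bind by (rule integral_pmf_of_set[OF V(2) V(1)])
  also have "\<dots> = (\<Sum>v'\<in>V. 1 - bpoly_eval (P v') x / C) / card V"
    using P C x by (simp add: inner_None)
  also have "\<dots> = 1 - (\<Sum>w\<in>V. bpoly_eval (P w) x / C) / card V"
    using V by (simp add: sum_subtractf diff_divide_distrib)
  finally show ?thesis .
qed


lemma race_factory:
  assumes V: "finite V" "V \<noteq> {}" and P: "\<forall>v\<in>V. is_bernstein_poly (P v)"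
    and C: "C \<ge> 1" "\<forall>v\<in>V. coeff_sum (P v) \<le> C" and x: "x \<in> unit_cube"
    and S: "(\<Sum>v\<in>V. bpoly_eval (P v) x) > 0"
    and eq: "(\<Sum>v\<in>V. bpoly_eval (P v) x *\<^sub>R v) = (\<Sum>v\<in>V. bpoly_eval (P v) x) *\<^sub>R x"
  shows "lossless_spmf (bernoulli_race V P C x) \<and> set_spmf (bernoulli_race V P C x) \<subseteq> V \<and>
         (\<Sum>v\<in>V. spmf (bernoulli_race V P C x) v *\<^sub>R v) = x"
proof -
  define F where "F = bernoulli_race V P C x"
  define R where "R = race_round V P C x"
  define K where "K = (\<lambda>r. case r of Some v \<Rightarrow> return_spmf v | None \<Rightarrow> F)"
  define SS where "SS = (\<Sum>v\<in>V. bpoly_eval (P v) x)"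
  define q where "q = pmf R None"
  have FR: "F = bind_pmf R K" unfolding F_def R_def K_def by (subst bernoulli_race.simps) simp
  have RS: "pmf R (Some v) = (if v \<in> V then bpoly_eval (P v) x / C else 0) / card V" for v
    unfolding R_def by (rule race_round_Some[OF V P C(2) x])
  have "pmf R None = 1 - (\<Sum>w\<in>V. bpoly_eval (P w) x / C) / card V"
    unfolding R_def by (rule race_round_None[OF V P C(2) x])
  then have q: "1 - q = SS / C / card V" unfolding q_def SS_def by (simp add: sum_divide_distrib)
  have cardV: "card V > 0" using V by auto
  have q1: "1 - q > 0" unfolding q using S C(1) cardV SS_def by simp
  define A where "A = insert None (Some ` V)"
  have finA: "finite A" unfolding A_def using V by simp
  have setR: "set_pmf R \<subseteq> A"
  proof
    fix r assume r: "r \<in> set_pmf R"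
    show "r \<in> A"
    proof (cases r)
      case None then show ?thesis unfolding A_def by simp
    next
      case (Some w)
      then have "pmf R (Some w) \<noteq> 0" using r by (simp add: set_pmf_eq)
      then have "w \<in> V" using RS[of w] by (auto split: if_splits)
      then show ?thesis unfolding A_def Some by simp
    qed
  qed
  have expand: "pmf F a = q * pmf F a + (\<Sum>w\<in>V. pmf R (Some w) * pmf (return_spmf w) a)" for a
  proof -
    have "pmf F a = (\<Sum>r\<in>A. pmf R r * pmf (K r) a)"
      unfolding FR pmf_bind using setR
      by (subst integral_measure_pmf[OF finA]) auto
    also have "\<dots> = pmf R None * pmf (K None) a + (\<Sum>r\<in>Some ` V. pmf R r * pmf (K r) a)"
      unfolding A_def using V(1) by (subst sum.insert) auto
    also have "(\<Sum>r\<in>Some ` V. pmf R r * pmf (K r) a) = (\<Sum>w\<in>V. pmf R (Some w) * pmf (K (Some w)) a)"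
      by (subst sum.reindex) (auto simp: inj_on_def)
    finally show ?thesis unfolding q_def K_def by simp
  qed
  have None0: "pmf F None = 0"
  proof -
    have "pmf F None = q * pmf F None" using expand[of None] by simp
    then have "(1 - q) * pmf F None = 0" by (simp add: algebra_simps)
    then show ?thesis using q1 by simp
  qed
  have spmfF: "spmf F v = (if v \<in> V then bpoly_eval (P v) x / SS else 0)" for v
  proof -
    have "(\<Sum>w\<in>V. pmf R (Some w) * pmf (return_spmf w) (Some v)) = (if v \<in> V then pmf R (Some v) else 0)"
      using V(1) by (simp add: pmf_return sum.delta' indicator_def)
    then have e0: "spmf F v = q * spmf F v + (if v \<in> V then pmf R (Some v) else 0)"
      using expand[of "Some v"] by simp
    define y where "y = (if v \<in> V then pmf R (Some v) else 0)"
    have "(1 - q) * spmf F v = y" using e0 unfolding y_def[symmetric] by (simp add: algebra_simps)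
    then have e: "(1 - q) * spmf F v = (if v \<in> V then bpoly_eval (P v) x / C / card V else 0)"
      unfolding y_def using RS[of v] by simp
    show ?thesis
    proof (cases "v \<in> V")
      case False then show ?thesis using e q1 by simp
    next
      case True
      have "(SS / C / card V) * spmf F v = bpoly_eval (P v) x / C / card V" using e True unfolding q by simp
      then have "SS * spmf F v = bpoly_eval (P v) x" using C(1) cardV by (simp add: field_simps)
      moreover have "SS > 0" using S SS_def by simp
      ultimately show ?thesis using True by (simp add: field_simps)
    qed
  qed
  have "lossless_spmf F" using None0 by (simp add: lossless_iff_pmf_None)
  moreover have "set_spmf F \<subseteq> V"
    using spmfF S SS_def by (auto simp: in_set_spmf_iff_spmf split: if_splits)
  moreover have "(\<Sum>v\<in>V. spmf F v *\<^sub>R v) = x"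
  proof -
    have "(\<Sum>v\<in>V. spmf F v *\<^sub>R v) = (\<Sum>v\<in>V. (1 / SS) *\<^sub>R (bpoly_eval (P v) x *\<^sub>R v))"
      using spmfF by (intro sum.cong) auto
    also have "\<dots> = (1 / SS) *\<^sub>R (SS *\<^sub>R x)"
      unfolding scaleR_sum_right[symmetric] eq SS_def ..
    also have "\<dots> = x" using S SS_def by simp
    finally show ?thesis .
  qed
  ultimately show ?thesis unfolding F_def by blast
qed

theorem theorem6p1:
  fixes H :: "(real ^ 'n::finite) set"
  assumes "affine H"
  defines "Pol \<equiv> unit_cube \<inter> H"
  defines "V \<equiv> {v. v extreme_point_of Pol}"
  shows "\<exists>P :: real ^ 'n \<Rightarrow> 'n bpoly.
           (\<forall>v\<in>V. is_bernstein_poly (P v)) \<and>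
           (\<forall>C::real. C \<ge> 1 \<and> (\<forall>v\<in>V. coeff_sum (P v) \<le> C) \<longrightarrow>
              is_bernoulli_factory_for Pol V (bernoulli_race V P C))"
proof -
  have co: "finite V \<and> (\<exists>P :: real ^ 'n \<Rightarrow> 'n bpoly. (\<forall>v\<in>V. is_bernstein_poly (P v)) \<and>
     (\<forall>x\<in>Pol \<inter> unit_open_cube. V \<noteq> {} \<and> (\<Sum>v\<in>V. bpoly_eval (P v) x) > 0 \<and>
        (\<Sum>v\<in>V. bpoly_eval (P v) x *\<^sub>R v) = (\<Sum>v\<in>V. bpoly_eval (P v) x) *\<^sub>R x))"
    unfolding V_def Pol_def by (rule core[OF assms(1)])
  then have finV: "finite V" by blast
  from co obtain P :: "real ^ 'n \<Rightarrow> 'n bpoly" where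
    Pb: "\<forall>v\<in>V. is_bernstein_poly (P v)" and
    Pm: "\<forall>x\<in>Pol \<inter> unit_open_cube. V \<noteq> {} \<and> (\<Sum>v\<in>V. bpoly_eval (P v) x) > 0 \<and>
        (\<Sum>v\<in>V. bpoly_eval (P v) x *\<^sub>R v) = (\<Sum>v\<in>V. bpoly_eval (P v) x) *\<^sub>R x"
    by blast
  have "is_bernoulli_factory_for Pol V (bernoulli_race V P C)"
    if C: "C \<ge> 1" "\<forall>v\<in>V. coeff_sum (P v) \<le> C" for C
    unfolding is_bernoulli_factory_for_def
  proof
    fix x assume x: "x \<in> Pol \<inter> unit_open_cube"
    have xc: "x \<in> unit_cube" using x unfolding Pol_def by blast
    have m: "V \<noteq> {}" "(\<Sum>v\<in>V. bpoly_eval (P v) x) > 0"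
        "(\<Sum>v\<in>V. bpoly_eval (P v) x *\<^sub>R v) = (\<Sum>v\<in>V. bpoly_eval (P v) x) *\<^sub>R x"
      using Pm x by blast+
    show "lossless_spmf (bernoulli_race V P C x) \<and> set_spmf (bernoulli_race V P C x) \<subseteq> V \<and>
         (\<Sum>v\<in>V. spmf (bernoulli_race V P C x) v *\<^sub>R v) = x"
      by (rule race_factory[OF finV m(1) Pb C(1) C(2) xc m(2) m(3)])
  qed
  then show ?thesis using Pb by blast
qed

end
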